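(* Let $C_1,C_2,\ell,r>0$ with $C_2\le C_1$, and let $T$ be a tree such that $\Delta(T)\le C_1$, all but $r$ vertices of $T$ have degree at most $C_2$, and $|V(T)|\ge \ell$. Then there exist disjoint vertex sets $A_1,\dots,A_s\subseteq V(T)$ such that: $V(T)=\bigcup_{i=1}^s A_i$; $T[A_i]$ is connected for each $1\le i\le s$; $\ell\le |A_i|\le C_1\ell$ for each $1\le i\le r$; and $\ell\le |A_i|\le C_2\ell$ for each $r<i\le s$.
   Context: $\Delta(T)$ denotes the maximum degree of $T$, and $T[A]$ denotes the subgraph of $T$ induced by $A$. *)

theory Defs
  imports Main
begin

definition simple_graph :: "'a set \<Rightarrow> ('a \<Rightarrow> 'a \<Rightarrow> bool) \<Rightarrow> bool" where
  "simple_graph V E \<longleftrightarrow> finite V \<and> (\<forall>x y. E x y \<longrightarrow> x \<in> V \<and> y \<in> V)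
     \<and> (\<forall>x y. E x y \<longrightarrow> E y x) \<and> (\<forall>x. \<not> E x x)"

definition degree :: "'a set \<Rightarrow> ('a \<Rightarrow> 'a \<Rightarrow> bool) \<Rightarrow> 'a \<Rightarrow> nat" where
  "degree V E v = card {u \<in> V. E v u}"

definition walk_in :: "'a set \<Rightarrow> ('a \<Rightarrow> 'a \<Rightarrow> bool) \<Rightarrow> 'a list \<Rightarrow> bool" where
  "walk_in A E xs \<longleftrightarrow> xs \<noteq> [] \<and> set xs \<subseteq> A \<and> (\<forall>i. Suc i < length xs \<longrightarrow> E (xs ! i) (xs ! Suc i))"

definition induced_connected :: "('a \<Rightarrow> 'a \<Rightarrow> bool) \<Rightarrow> 'a set \<Rightarrow> bool" where
  "induced_connected E A \<longleftrightarrow> A \<noteq> {} \<and>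
     (\<forall>x\<in>A. \<forall>y\<in>A. \<exists>xs. walk_in A E xs \<and> hd xs = x \<and> last xs = y)"

definition is_cycle :: "'a set \<Rightarrow> ('a \<Rightarrow> 'a \<Rightarrow> bool) \<Rightarrow> 'a list \<Rightarrow> bool" where
  "is_cycle V E xs \<longleftrightarrow> length xs \<ge> 3 \<and> distinct xs \<and> walk_in V E xs \<and> E (last xs) (hd xs)"

definition is_tree :: "'a set \<Rightarrow> ('a \<Rightarrow> 'a \<Rightarrow> bool) \<Rightarrow> bool" where
  "is_tree V E \<longleftrightarrow> simple_graph V E \<and> induced_connected E V \<and> (\<nexists>xs. is_cycle V E xs)"

end

theory Submission
  imports Defs
begin


lemma walk_in_Cons:
  "walk_in A E (x # xs) \<longleftrightarrow> x \<in> A \<and> (xs = [] \<or> (E x (hd xs) \<and> walk_in A E xs))"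
proof (cases xs)
  case Nil
  then show ?thesis by (auto simp: walk_in_def)
next
  case (Cons y ys)
  show ?thesis
  proof
    assume H: "walk_in A E (x # xs)"
    have 1: "E x y" using H Cons unfolding walk_in_def by (metis length_Cons nth_Cons_0 nth_Cons_Suc zero_less_Suc Suc_less_eq)
    have 2: "\<forall>i. Suc i < length xs \<longrightarrow> E (xs ! i) (xs ! Suc i)"
    proof (intro allI impI)
      fix i assume "Suc i < length xs"
      then have "Suc (Suc i) < length (x # xs)" by simp
      then have "E ((x#xs) ! Suc i) ((x#xs) ! Suc (Suc i))" using H unfolding walk_in_def by blast
      then show "E (xs ! i) (xs ! Suc i)" by simp
    qed
    show "x \<in> A \<and> (xs = [] \<or> (E x (hd xs) \<and> walk_in A E xs))"
      using H 1 2 Cons unfolding walk_in_def by auto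
  next
    assume H: "x \<in> A \<and> (xs = [] \<or> (E x (hd xs) \<and> walk_in A E xs))"
    then have xa: "x \<in> A" and e: "E x y" and w: "walk_in A E xs" using Cons by auto
    have "\<forall>i. Suc i < length (x#xs) \<longrightarrow> E ((x#xs) ! i) ((x#xs) ! Suc i)"
    proof (intro allI impI)
      fix i assume i: "Suc i < length (x#xs)"
      show "E ((x#xs) ! i) ((x#xs) ! Suc i)"
      proof (cases i)
        case 0 then show ?thesis using e Cons by simp
      next
        case (Suc j) then show ?thesis using w i unfolding walk_in_def by auto
      qed
    qed
    then show "walk_in A E (x # xs)" using xa w unfolding walk_in_def by auto
  qed
qed

lemma walk_in_append:
  "walk_in A E xs \<Longrightarrow> walk_in A E ys \<Longrightarrow> E (last xs) (hd ys) \<Longrightarrow> walk_in A E (xs @ ys)"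
proof (induction xs)
  case Nil then show ?case by (simp add: walk_in_def)
next
  case (Cons x xs)
  show ?case
  proof (cases "xs = []")
    case True then show ?thesis using Cons.prems
      by (auto simp: walk_in_Cons)
  next
    case False
    then have "walk_in A E (xs @ ys)" using Cons by (auto simp: walk_in_Cons)
    then show ?thesis using Cons.prems False by (auto simp: walk_in_Cons)
  qed
qed

lemma walk_in_join:
  assumes a: "walk_in A E xs" "walk_in A E ys" "last xs = hd ys"
  shows "walk_in A E (xs @ tl ys)"
proof (cases ys)
  case Nil then show ?thesis using a by (simp add: walk_in_def)
next
  case (Cons y zs)
  show ?thesis
  proof (cases "zs = []")
    case True then show ?thesis using a Cons by simp
  next
    case False
    then show ?thesis using a Cons by (auto simp: walk_in_Cons intro!: walk_in_append)
  qed
qed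

lemma walk_in_rev:
  assumes sym: "\<forall>x y. E x y \<longrightarrow> E y x"
  shows "walk_in A E xs \<Longrightarrow> walk_in A E (rev xs)"
proof (induction xs)
  case Nil then show ?case by (simp add: walk_in_def)
next
  case (Cons x xs)
  show ?case
  proof (cases "xs = []")
    case True then show ?thesis using Cons.prems by simp
  next
    case False
    then have w: "walk_in A E xs" "E x (hd xs)" "x \<in> A" using Cons.prems by (auto simp: walk_in_Cons)
    have "walk_in A E (rev xs @ [x])"
      apply (rule walk_in_append)
      using Cons.IH w sym False by (auto simp: walk_in_Cons last_rev)
    then show ?thesis by simp
  qed
qed

lemma conn_center:
  assumes sym: "\<forall>x y. E x y \<longrightarrow> E y x" and c: "c \<in> A"
    and w: "\<forall>y\<in>A. \<exists>xs. walk_in A E xs \<and> hd xs = y \<and> last xs = c"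
  shows "induced_connected E A"
  unfolding induced_connected_def
proof (intro conjI ballI)
  show "A \<noteq> {}" using c by auto
next
  fix y z assume y: "y \<in> A" and z: "z \<in> A"
  obtain ys where ys: "walk_in A E ys" "hd ys = y" "last ys = c" using w y by blast
  obtain zs where zs: "walk_in A E zs" "hd zs = z" "last zs = c" using w z by blast
  have r: "walk_in A E (rev zs)" using walk_in_rev[OF sym] zs by blast
  have ne: "ys \<noteq> []" "zs \<noteq> []" using ys zs by (auto simp: walk_in_def)
  have "walk_in A E (ys @ tl (rev zs))" using walk_in_join[OF ys(1) r] ys zs ne by (simp add: hd_rev)
  moreover have "hd (ys @ tl (rev zs)) = y" using ys ne by simp
  moreover have "last (ys @ tl (rev zs)) = z"
  proof (cases "tl (rev zs) = []")
    case True
    then have "rev zs = [hd (rev zs)]" using ne by (metis Nil_is_rev_conv list.collapse)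
    then have "zs = [z]" using zs by (metis rev_singleton_conv list.sel(1))
    then show ?thesis using ys zs True by simp
  next
    case False
    have "last (tl (rev zs)) = last (rev zs)" using False by (simp add: last_tl)
    also have "\<dots> = hd zs" using ne by (simp add: last_rev)
    finally show ?thesis using False zs by simp
  qed
  ultimately show "\<exists>xs. walk_in A E xs \<and> hd xs = y \<and> last xs = z" by blast
qed

lemma exists_parent:
  assumes conn: "induced_connected E V" and rtV: "rt \<in> V"
  shows "\<exists>par (h::'a\<Rightarrow>nat). par rt = rt \<and> (\<forall>x\<in>V. par x \<in> V)
           \<and> (\<forall>x\<in>V. x \<noteq> rt \<longrightarrow> E x (par x) \<and> h (par x) < h x)"
proof -
  define h where "h x = (LEAST n. \<exists>xs. walk_in V E xs \<and> hd xs = x \<and> last xs = rt \<and> length xs = Suc n)" for x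
  have step: "\<exists>y. y \<in> V \<and> E x y \<and> h y < h x" if x: "x \<in> V" "x \<noteq> rt" for x
  proof -
    obtain xs where xs: "walk_in V E xs" "hd xs = x" "last xs = rt"
      using conn x rtV unfolding induced_connected_def by blast
    then have "\<exists>n xs. walk_in V E xs \<and> hd xs = x \<and> last xs = rt \<and> length xs = Suc n"
      by (intro exI[of _ "length xs - 1"] exI[of _ xs]) (auto simp: walk_in_def)
    then have "\<exists>ys. walk_in V E ys \<and> hd ys = x \<and> last ys = rt \<and> length ys = Suc (h x)"
      unfolding h_def by (rule LeastI_ex)
    then obtain ys where ys: "walk_in V E ys" "hd ys = x" "last ys = rt" "length ys = Suc (h x)" by blast
    obtain a zs where azs: "ys = a # zs" using ys by (cases ys) auto
    have zne: "zs \<noteq> []" using azs ys x by auto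
    have zw: "E x (hd zs)" "walk_in V E zs" using ys azs zne by (auto simp: walk_in_Cons)
    have zl: "last zs = rt" "length zs = h x" using ys azs zne by auto
    have hpos: "h x = Suc (h x - 1)" using zl zne by (cases zs) auto
    have ex: "walk_in V E zs \<and> hd zs = hd zs \<and> last zs = rt \<and> length zs = Suc (h x - 1)"
      using zw zl hpos by simp
    have "h (hd zs) \<le> h x - 1"
      unfolding h_def[of "hd zs"] by (rule Least_le) (use ex in blast)
    then have "h (hd zs) < h x" using hpos by linarith
    moreover have "hd zs \<in> V" using zw zne unfolding walk_in_def by auto
    ultimately show ?thesis using zw by blast
  qed
  define par where "par x = (if x \<in> V - {rt} then (SOME y. y \<in> V \<and> E x y \<and> h y < h x) else rt)" for x
  have "\<forall>x\<in>V. x \<noteq> rt \<longrightarrow> par x \<in> V \<and> E x (par x) \<and> h (par x) < h x"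
  proof (intro ballI impI)
    fix x assume "x \<in> V" "x \<noteq> rt"
    then show "par x \<in> V \<and> E x (par x) \<and> h (par x) < h x"
      unfolding par_def using someI_ex[OF step] by auto
  qed
  moreover have "par rt = rt" unfolding par_def by simp
  ultimately show ?thesis using rtV by (metis)
qed



definition desc :: "('a \<Rightarrow> 'a) \<Rightarrow> 'a \<Rightarrow> 'a set" where
  "desc p x = {y. \<exists>k. (p ^^ k) y = x}"

context
  fixes V :: "'a set" and E :: "'a \<Rightarrow> 'a \<Rightarrow> bool" and par :: "'a \<Rightarrow> 'a"
    and h :: "'a \<Rightarrow> nat" and rt :: 'a
  assumes fin: "finite V" and sym: "\<forall>x y. E x y \<longrightarrow> E y x"
    and inV: "\<forall>x y. E x y \<longrightarrow> x \<in> V \<and> y \<in> V"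
    and rtV: "rt \<in> V" and par_rt: "par rt = rt" and parV: "\<forall>x\<in>V. par x \<in> V"
    and parE: "\<forall>x\<in>V. x \<noteq> rt \<longrightarrow> E x (par x) \<and> h (par x) < h x"
begin

lemma funpow_rt: "(par ^^ k) rt = rt"
  by (induction k) (simp_all add: par_rt)

lemma reach_rt: "y \<in> V \<Longrightarrow> \<exists>k. (par ^^ k) y = rt"
proof (induction "h y" arbitrary: y rule: less_induct)
  case less
  show ?case
  proof (cases "y = rt")
    case True then show ?thesis by (intro exI[of _ 0]) simp
  next
    case False
    then have "par y \<in> V" "h (par y) < h y" using parE parV less.prems by auto
    then obtain k where "(par ^^ k) (par y) = rt" using less.hyps by blast
    then have "(par ^^ Suc k) y = rt" by (simp add: funpow_Suc_right del: funpow.simps)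
    then show ?thesis by blast
  qed
qed

lemma closed_pow: "\<forall>y\<in>W. par y \<in> W \<Longrightarrow> y \<in> W \<Longrightarrow> (par ^^ k) y \<in> W"
  by (induction k) auto

lemma desc_self: "x \<in> desc par x"
  unfolding desc_def by (auto intro: exI[of _ 0])

lemma desc_rt: "W \<subseteq> V \<Longrightarrow> desc par rt \<inter> W = W"
  using reach_rt unfolding desc_def by blast

lemma child:
  assumes "y \<in> desc par x" "y \<noteq> x" "y \<in> W" "\<forall>y\<in>W. par y \<in> W"
  shows "\<exists>c\<in>W. c \<noteq> x \<and> par c = x \<and> y \<in> desc par c"
proof -
  have "\<exists>k. (par ^^ k) y = x" using assms(1) unfolding desc_def by blast
  then obtain k where k: "(par ^^ k) y = x" "\<forall>i<k. (par ^^ i) y \<noteq> x"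
    using exists_least_iff[of "\<lambda>k. (par ^^ k) y = x"] by blast
  obtain j where j: "k = Suc j" using k assms(2) by (cases k) auto
  define c where "c = (par ^^ j) y"
  have "par c = x" using k j unfolding c_def by simp
  moreover have "c \<noteq> x" using k j unfolding c_def by simp
  moreover have "c \<in> W" unfolding c_def using closed_pow assms by blast
  moreover have "y \<in> desc par c" unfolding desc_def c_def by blast
  ultimately show ?thesis by blast
qed

lemma child_h: assumes "c \<in> V" "c \<noteq> x" "par c = x" shows "h x < h c"
proof -
  have "c \<noteq> rt" using assms par_rt by auto
  then show ?thesis using parE assms by auto
qed

lemma child_nbr: assumes "c \<in> V" "c \<noteq> x" "par c = x" shows "E x c"
proof -
  have "c \<noteq> rt" using assms par_rt by auto
  then have "E c x" using parE assms by auto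
  then show ?thesis using sym by blast
qed

lemma child_not_par: "x \<in> V \<Longrightarrow> x \<noteq> rt \<Longrightarrow> c \<in> V \<Longrightarrow> c \<noteq> x \<Longrightarrow> par c = x \<Longrightarrow> c \<noteq> par x"
  using child_h parE by fastforce

lemma rt_notin: "x \<noteq> rt \<Longrightarrow> rt \<notin> desc par x"
  unfolding desc_def by (simp add: funpow_rt)

lemma remove_closed:
  assumes "\<forall>y\<in>W. par y \<in> W"
  shows "\<forall>y\<in>W - desc par x. par y \<in> W - desc par x"
proof
  fix y assume y: "y \<in> W - desc par x"
  have "par y \<notin> desc par x"
  proof
    assume "par y \<in> desc par x"
    then obtain k where "(par ^^ k) (par y) = x" unfolding desc_def by blast
    then have "(par ^^ Suc k) y = x" by (simp add: funpow_Suc_right del: funpow.simps)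
    then show False using y unfolding desc_def by blast
  qed
  then show "par y \<in> W - desc par x" using assms y by blast
qed

lemma desc_conn:
  assumes xW: "x \<in> W" and WV: "W \<subseteq> V" and cl: "\<forall>y\<in>W. par y \<in> W"
  shows "induced_connected E (desc par x \<inter> W)"
proof (rule conn_center[OF sym])
  show "x \<in> desc par x \<inter> W" using xW desc_self by blast
next
  have gen: "\<forall>y. (par ^^ k) y = x \<longrightarrow> (\<forall>i<k. (par ^^ i) y \<noteq> x) \<longrightarrow> y \<in> W \<longrightarrow>
      (\<exists>xs. walk_in (desc par x \<inter> W) E xs \<and> hd xs = y \<and> last xs = x)" for k
  proof (induction k)
    case 0
    show ?case using desc_self by (auto intro!: exI[of _ "[x]"] simp: walk_in_def)
  next
    case (Suc k)
    show ?case
    proof (intro allI impI)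
      fix y assume a: "(par ^^ Suc k) y = x" "\<forall>i<Suc k. (par ^^ i) y \<noteq> x" "y \<in> W"
      have a1: "(par ^^ k) (par y) = x" using a(1) by (simp add: funpow_Suc_right del: funpow.simps)
      have a2: "\<forall>i<k. (par ^^ i) (par y) \<noteq> x"
      proof (intro allI impI)
        fix i assume "i < k"
        then have "(par ^^ Suc i) y \<noteq> x" using a(2) by blast
        then show "(par ^^ i) (par y) \<noteq> x" by (simp add: funpow_Suc_right del: funpow.simps)
      qed
      have a3: "par y \<in> W" using cl a(3) by blast
      obtain xs where xs: "walk_in (desc par x \<inter> W) E xs" "hd xs = par y" "last xs = x"
        using Suc.IH a1 a2 a3 by blast
      have yx: "y \<noteq> x" using a(2)[rule_format, of 0] by simp
      have yrt: "y \<noteq> rt"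
      proof
        assume "y = rt"
        then have "x = rt" using a(1) funpow_rt par_rt by simp
        then show False using yx \<open>y = rt\<close> by simp
      qed
      have "E y (par y)" using parE yrt a(3) WV by blast
      moreover have "y \<in> desc par x \<inter> W" using a(1) a(3) unfolding desc_def by blast
      moreover have "xs \<noteq> []" using xs unfolding walk_in_def by blast
      ultimately have "walk_in (desc par x \<inter> W) E (y # xs)" using xs by (simp add: walk_in_Cons)
      then show "\<exists>xs. walk_in (desc par x \<inter> W) E xs \<and> hd xs = y \<and> last xs = x"
        using xs \<open>xs \<noteq> []\<close> by (intro exI[of _ "y # xs"]) simp
    qed
  qed
  show "\<forall>y\<in>desc par x \<inter> W. \<exists>xs. walk_in (desc par x \<inter> W) E xs \<and> hd xs = y \<and> last xs = x"
  proof
    fix y assume y: "y \<in> desc par x \<inter> W"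
    have "\<exists>k. (par ^^ k) y = x" using y unfolding desc_def by blast
    then obtain k where k: "(par ^^ k) y = x" "\<forall>i<k. (par ^^ i) y \<noteq> x"
      using exists_least_iff[of "\<lambda>k. (par ^^ k) y = x"] by blast
    then show "\<exists>xs. walk_in (desc par x \<inter> W) E xs \<and> hd xs = y \<and> last xs = x"
      using gen y by blast
  qed
qed


lemma main:
  assumes "l > 0"
  shows "W \<subseteq> V \<Longrightarrow> rt \<in> W \<Longrightarrow> \<forall>y\<in>W. par y \<in> W \<Longrightarrow> l \<le> card W \<Longrightarrow>
    \<exists>Ps. distinct Ps \<and> (\<forall>P\<in>set Ps. \<forall>Q\<in>set Ps. P \<noteq> Q \<longrightarrow> P \<inter> Q = {}) \<and> \<Union>(set Ps) = W
      \<and> (\<forall>P\<in>set Ps. induced_connected E P \<and> l \<le> card P \<and> (\<exists>v\<in>P. card P \<le> l * max 1 (degree V E v)))"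
proof (induction "card W" arbitrary: W rule: less_induct)
  case less
  note WV = less.prems(1) and rtW = less.prems(2) and cl = less.prems(3) and lW = less.prems(4)
  have finW: "finite W" using WV fin finite_subset by blast
  show ?case
  proof (cases "\<exists>v\<in>W. card W \<le> l * max 1 (degree V E v)")
    case True
    have "induced_connected E W" using desc_conn[OF rtW WV cl] desc_rt[OF WV] by simp
    then show ?thesis using True lW by (intro exI[of _ "[W]"]) auto
  next
    case False
    define S where "S = {x\<in>W. l \<le> card (desc par x \<inter> W)}"
    have finS: "finite S" using finW unfolding S_def by simp
    have rtS: "rt \<in> S" using rtW lW desc_rt[OF WV] unfolding S_def by simp
    define m where "m = Max (h ` S)"
    have "m \<in> h ` S" unfolding m_def using finS rtS by (intro Max_in) auto
    then obtain x where xS: "x \<in> S" and hx: "h x = m" by blast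
    have xmax: "\<And>c. c \<in> S \<Longrightarrow> h c \<le> h x" unfolding hx m_def using finS by simp
    have xW: "x \<in> W" using xS unfolding S_def by simp
    have xV: "x \<in> V" using xW WV by blast
    define C where "C = {c\<in>W. c \<noteq> x \<and> par c = x}"
    have finC: "finite C" using finW unfolding C_def by simp
    have sub: "desc par x \<inter> W \<subseteq> {x} \<union> (\<Union>c\<in>C. desc par c \<inter> W)"
    proof
      fix y assume y: "y \<in> desc par x \<inter> W"
      show "y \<in> {x} \<union> (\<Union>c\<in>C. desc par c \<inter> W)"
      proof (cases "y = x")
        case False
        then obtain c where "c \<in> W" "c \<noteq> x" "par c = x" "y \<in> desc par c"
          using child[of y x W] y cl by blast
        then show ?thesis using y unfolding C_def by blast
      qed simp
    qed
    have each: "card (desc par c \<inter> W) \<le> l - 1" if c: "c \<in> C" for c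
    proof -
      have "c \<in> V" "c \<noteq> x" "par c = x" "c \<in> W" using c WV unfolding C_def by auto
      then have "h x < h c" using child_h by blast
      then have "c \<notin> S" using xmax by fastforce
      then show ?thesis using \<open>c \<in> W\<close> unfolding S_def by simp
    qed
    have cardP: "card (desc par x \<inter> W) \<le> 1 + card C * (l - 1)"
    proof -
      have "card (desc par x \<inter> W) \<le> card ({x} \<union> (\<Union>c\<in>C. desc par c \<inter> W))"
        using sub finW finC by (intro card_mono) auto
      also have "\<dots> \<le> card {x} + card (\<Union>c\<in>C. desc par c \<inter> W)" by (rule card_Un_le)
      also have "\<dots> \<le> 1 + (\<Sum>c\<in>C. card (desc par c \<inter> W))" using card_UN_le[OF finC, of "\<lambda>c. desc par c \<inter> W"] by (simp del: Int_UN_distrib2 UN_extend_simps)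
      also have "\<dots> \<le> 1 + card C * (l - 1)" using each sum_bounded_above[of C "\<lambda>c. card (desc par c \<inter> W)" "l - 1"] by simp
      finally show ?thesis .
    qed
    define N where "N = {u\<in>V. E x u}"
    have finN: "finite N" using fin unfolding N_def by simp
    have CN: "C \<subseteq> N" unfolding C_def N_def using child_nbr WV by blast
    have dN: "degree V E x = card N" unfolding degree_def N_def by simp
    show ?thesis
    proof (cases "x = rt")
      case True
      have "card W \<le> 1 + card C * (l - 1)" using cardP desc_rt[OF WV] True by simp
      also have "\<dots> \<le> 1 + degree V E x * (l - 1)" using card_mono[OF finN CN] dN by simp
      also have "\<dots> \<le> l * max 1 (degree V E x)"
      proof (cases "degree V E x")
        case 0 then show ?thesis using assms by simp
      next
        case (Suc d)
        then show ?thesis using assms by (cases l) (auto simp: algebra_simps)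
      qed
      finally show ?thesis using False xW by blast
    next
      case xrt: False
      have pN: "par x \<in> N" using parE xV xrt inV unfolding N_def by blast
      have CN': "C \<subseteq> N - {par x}" using CN child_not_par[OF xV xrt] WV unfolding C_def by blast
      have "card C \<le> card (N - {par x})" using card_mono[OF _ CN'] finN by simp
      then have cC: "card C \<le> degree V E x - 1" using pN finN dN by simp
      have dpos: "degree V E x \<ge> 1" using pN finN dN card_0_eq by (metis One_nat_def Suc_leI empty_iff gr0I)
      define d where "d = degree V E x"
      define P where "P = desc par x \<inter> W"
      have cP: "card P \<le> 1 + (d - 1) * (l - 1)"
        using cardP cC mult_le_mono1[OF cC, of "l - 1"] unfolding P_def d_def by linarith
      have cW: "card W > l * d"
      proof -
        have "\<not> card W \<le> l * max 1 (degree V E x)" using False xW by blast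
        moreover have "max 1 (degree V E x) = d" using dpos unfolding d_def by simp
        ultimately show ?thesis by simp
      qed
      have bnd1: "card P \<le> l * max 1 d"
      proof -
        obtain d' where "d = Suc d'" using dpos unfolding d_def by (metis One_nat_def Suc_le_D)
        moreover obtain l' where "l = Suc l'" using assms by (cases l) auto
        ultimately show ?thesis using cP by (simp add: algebra_simps)
      qed
      have PW: "P \<subseteq> W" unfolding P_def by blast
      have cWP: "card (W - P) = card W - card P" using PW finW by (simp add: card_Diff_subset finite_subset)
      have bnd2: "l \<le> card (W - P)"
      proof -
        obtain d' where "d = Suc d'" using dpos unfolding d_def by (metis One_nat_def Suc_le_D)
        moreover obtain l' where "l = Suc l'" using assms by (cases l) auto
        ultimately show ?thesis using cP cW cWP by (simp add: algebra_simps)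
      qed
      have xP: "x \<in> P" unfolding P_def using xW desc_self by blast
      have lt: "card (W - P) < card W" using xP xW finW by (intro psubset_card_mono) auto
      have "\<exists>Ps. distinct Ps \<and> (\<forall>P\<in>set Ps. \<forall>Q\<in>set Ps. P \<noteq> Q \<longrightarrow> P \<inter> Q = {}) \<and> \<Union>(set Ps) = W - P
         \<and> (\<forall>P\<in>set Ps. induced_connected E P \<and> l \<le> card P \<and> (\<exists>v\<in>P. card P \<le> l * max 1 (degree V E v)))"
        apply (rule less.hyps[OF lt])
        using WV rt_notin[OF xrt] rtW remove_closed[OF cl, of x] bnd2 unfolding P_def by auto
      then obtain Ps where Ps: "distinct Ps" "\<forall>P\<in>set Ps. \<forall>Q\<in>set Ps. P \<noteq> Q \<longrightarrow> P \<inter> Q = {}"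
        "\<Union>(set Ps) = W - P"
        "\<forall>P\<in>set Ps. induced_connected E P \<and> l \<le> card P \<and> (\<exists>v\<in>P. card P \<le> l * max 1 (degree V E v))"
        by blast
      have disj: "\<forall>Q\<in>set Ps. P \<inter> Q = {}" using Ps(3) by blast
      have notin: "P \<notin> set Ps" using disj xP by blast
      have connP: "induced_connected E P" unfolding P_def using desc_conn[OF xW WV cl] .
      have lP: "l \<le> card P" using xS unfolding S_def P_def by simp
      show ?thesis
        apply (rule exI[of _ "P # Ps"])
        using Ps notin disj connP lP bnd1 xP PW unfolding d_def by (auto simp: Int_commute)
    qed
  qed
qed

end


theorem lemma2p1:
  fixes V :: "'a set" and E :: "'a \<Rightarrow> 'a \<Rightarrow> bool"
    and C1 C2 l r :: nat
  assumes "C1 > 0" "C2 > 0" "l > 0" "r > 0" "C2 \<le> C1"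
    and "is_tree V E"
    and "\<forall>v\<in>V. degree V E v \<le> C1"
    and "card {v \<in> V. degree V E v > C2} \<le> r"
    and "card V \<ge> l"
  shows "\<exists>As :: 'a set list.
           (\<forall>i<length As. \<forall>j<length As. i \<noteq> j \<longrightarrow> As ! i \<inter> As ! j = {})
         \<and> V = \<Union>(set As)
         \<and> (\<forall>i<length As. induced_connected E (As ! i))
         \<and> (\<forall>i<length As. i < r \<longrightarrow> l \<le> card (As ! i) \<and> card (As ! i) \<le> C1 * l)
         \<and> (\<forall>i<length As. r \<le> i \<longrightarrow> l \<le> card (As ! i) \<and> card (As ! i) \<le> C2 * l)"
proof -
  have sg: "simple_graph V E" and conn: "induced_connected E V" using assms(6) unfolding is_tree_def by auto
  have fin: "finite V" and inV: "\<forall>x y. E x y \<longrightarrow> x \<in> V \<and> y \<in> V" and sym: "\<forall>x y. E x y \<longrightarrow> E y x"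
    using sg unfolding simple_graph_def by auto
  have "V \<noteq> {}" using assms(3,9) by auto
  then obtain rt where rtV: "rt \<in> V" by blast
  obtain par and h :: "'a \<Rightarrow> nat" where ph: "par rt = rt" "\<forall>x\<in>V. par x \<in> V"
      "\<forall>x\<in>V. x \<noteq> rt \<longrightarrow> E x (par x) \<and> h (par x) < h x"
    using exists_parent[OF conn rtV] by blast
  obtain Ps where Ps: "distinct Ps" "\<forall>P\<in>set Ps. \<forall>Q\<in>set Ps. P \<noteq> Q \<longrightarrow> P \<inter> Q = {}"
        "\<Union>(set Ps) = V"
        "\<forall>P\<in>set Ps. induced_connected E P \<and> l \<le> card P \<and> (\<exists>v\<in>P. card P \<le> l * max 1 (degree V E v))"
    using main[OF fin sym inV rtV ph assms(3), of V] rtV ph(2) assms(9) by blast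
  define big where "big P = (\<exists>v\<in>P. C2 < degree V E v)" for P
  define Bs where "Bs = filter big Ps"
  define Ss where "Ss = filter (\<lambda>P. \<not> big P) Ps"
  define As where "As = Bs @ Ss"
  have setAs: "set As = set Ps" unfolding As_def Bs_def Ss_def by auto
  have distAs: "distinct As" unfolding As_def Bs_def Ss_def using Ps(1) by auto
  have disjAs: "\<forall>i<length As. \<forall>j<length As. i \<noteq> j \<longrightarrow> As ! i \<inter> As ! j = {}"
  proof (intro allI impI)
    fix i j assume ij: "i < length As" "j < length As" "i \<noteq> j"
    then have "As ! i \<noteq> As ! j" using distAs nth_eq_iff_index_eq by blast
    moreover have "As ! i \<in> set Ps" "As ! j \<in> set Ps" using ij setAs nth_mem by blast+
    ultimately show "As ! i \<inter> As ! j = {}" using Ps(2) by blast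
  qed
  have piece: "P \<in> set As \<Longrightarrow> induced_connected E P \<and> l \<le> card P \<and> card P \<le> C1 * l" for P
  proof -
    assume P: "P \<in> set As"
    then obtain v where v: "v \<in> P" "card P \<le> l * max 1 (degree V E v)" using Ps(4) setAs by blast
    have "v \<in> V" using v P setAs Ps(3) by blast
    then have "max 1 (degree V E v) \<le> C1" using assms(1,7) by auto
    then have "card P \<le> C1 * l" using v(2) by (metis mult.commute mult_le_mono2 order_trans)
    then show ?thesis using P Ps(4) setAs by blast
  qed
  have lenB: "length Bs \<le> r"
  proof -
    define f where "f P = (SOME v. v \<in> P \<and> C2 < degree V E v)" for P
    have fP: "f P \<in> P \<and> C2 < degree V E (f P)" if "P \<in> set Bs" for P
    proof -
      have "\<exists>v. v \<in> P \<and> C2 < degree V E v" using that unfolding Bs_def big_def by auto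
      then show ?thesis unfolding f_def by (rule someI_ex)
    qed
    have inj: "inj_on f (set Bs)"
    proof (rule inj_onI)
      fix P Q assume PQ: "P \<in> set Bs" "Q \<in> set Bs" "f P = f Q"
      then have "f P \<in> P \<inter> Q" using fP[OF PQ(1)] fP[OF PQ(2)] by simp
      moreover have "P \<in> set Ps" "Q \<in> set Ps" using PQ unfolding Bs_def by auto
      ultimately show "P = Q" using Ps(2) by blast
    qed
    have img: "f ` set Bs \<subseteq> {v \<in> V. degree V E v > C2}"
    proof
      fix w assume "w \<in> f ` set Bs"
      then obtain P where P: "P \<in> set Bs" "w = f P" by blast
      then have "P \<in> set Ps" unfolding Bs_def by simp
      then show "w \<in> {v \<in> V. degree V E v > C2}" using fP[OF P(1)] P Ps(3) by blast
    qed
    have "length Bs = card (set Bs)" using distAs unfolding As_def by (simp add: distinct_card)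
    also have "\<dots> \<le> card {v \<in> V. degree V E v > C2}" using card_inj_on_le[OF inj img] fin by simp
    finally show ?thesis using assms(8) by simp
  qed
  have small: "card (As ! i) \<le> C2 * l" if i: "i < length As" "r \<le> i" for i
  proof -
    have "As ! i = Ss ! (i - length Bs)" using i lenB unfolding As_def by (simp add: nth_append)
    moreover have "i - length Bs < length Ss" using i lenB unfolding As_def by simp
    ultimately have "As ! i \<in> set Ss" by simp
    then have P: "As ! i \<in> set Ps" "\<not> big (As ! i)" unfolding Ss_def by auto
    then obtain v where v: "v \<in> As ! i" "card (As ! i) \<le> l * max 1 (degree V E v)" using Ps(4) by blast
    have "max 1 (degree V E v) \<le> C2" using P(2) v(1) assms(2) unfolding big_def by auto
    then show ?thesis using v(2) by (metis mult.commute mult_le_mono2 order_trans)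
  qed
  show ?thesis
    apply (rule exI[of _ As])
    using disjAs setAs Ps(3) piece small nth_mem by blast
qed

end
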